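(* Let $\varphi\in\mathrm{THT}_1(\mathsf X,\mathsf G)$ and let $M$ be an equilibrium model of $\varphi$. Then every witness extraction of $M$ for $\varphi$ is also an equilibrium model of $\varphi$.
   Context: Fix a finite set $P$ of atomic propositions. THT formulas over $P$: $\varphi ::= p \mid \bot \mid \varphi\vee\varphi \mid \varphi\wedge\varphi \mid \varphi\rightarrow\varphi \mid \mathsf{X}\varphi \mid \varphi\,\mathsf{U}\,\varphi \mid \varphi\,\mathsf{R}\,\varphi$, with $\neg\varphi:=\varphi\rightarrow\bot$, $\top:=\neg\bot$, $\mathsf F\varphi:=\top\mathsf U\varphi$, $\mathsf G\varphi:=\bot\mathsf R\varphi$. A THT interpretation is a pair $M=(H,T)$ of infinite words over $2^P$ with $H(i)\subseteq T(i)$ for all $i$. Write $M(i)=(H(i),T(i))$; $M$ is total if $H=T$. Satisfaction $M,i\models\varphi$ is defined by: - $M,i\not\models\bot$; - $M,i\models p$ iff $p\in H(i)$; - $\vee$ and $\wedge$ are interpreted as usual; - $M,i\models\varphi\rightarrow\psi$ iff for both $H'\in\{H,T\}$, either $(H',T),i\not\models\varphi$ or $(H',T),i\models\psi$; - $M,i\models\mathsf X\varphi$ iff $M,i+1\models\varphi$; - $\mathsf U$ and $\mathsf R$ have the usual LTL clauses evaluated in $M$ (so $M,i\models\mathsf G\varphi$ iff $M,j\models\varphi$ for all $j\ge i$). $M\models\varphi$ means $M,0\models\varphi$. An equilibrium model of $\varphi$ is a total $(T,T)\models\varphi$ with $(H,T)\not\models\varphi$ whenever $H(i)\subseteq T(i)$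 for all $i$ and $H\ne T$. $\mathrm{THT}_1(\mathsf X,\mathsf G)$ is the set of formulas whose only temporal modalities are $\mathsf X$ and $\mathsf G$, with no temporal modality nested inside another. Witness pattern. A witness pattern of $M=(H,T)$ for $\varphi$ is a strictly increasing sequence $n_0<n_1<\cdots$ such that, for some $k\ge0$, $M(n_i)=M(n_{k+1})$ for all $i\ge k+1$, and $W=\{n_0,\dots,n_k\}$ is minimal with respect to the following conditions: - $0\in W$, and $1\in W$ if $\varphi$ has a subformula $\mathsf X\psi$; - if $M$ is not total, some $i$ with $H(i)\subsetneq T(i)$ is in $W$; - for each subformula $\varphi_1\mathsf U\varphi_2$: if $M\models\varphi_1\mathsf U\varphi_2$, the least $i$ with $M,i\models\varphi_2$ is in $W$; if $M\not\models\varphi_1\mathsf U\varphi_2$ and $M\models\mathsf F\varphi_2$, the least $i$ with $M,i\not\models\varphi_1$ is in $W$; - for each subformula $\varphi_1\mathsf R\varphi_2$ (in particular each $\mathsf G\psi=\bot\mathsf R\psi$): if $M\not\models\varphi_1\mathsf R\varphi_2$, the least $i$ with $M,i\not\models\varphi_2$ is in $W$; if $M\models\varphi_1\mathsf R\varphi_2$ and $M\not\models\mathsf G\varphi_2$, the least $i$ with $M,i\models\varphi_1\wedge\varphi_2$ is in $W$. A witness extraction of $M$ for $\varphi$ is an interpretation $M(n_0),M(n_1),\dots$ where $n_0<n_1<\cdots$ is a witness pattern of $M$ for $\varphi$. *)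

theory Defs
  imports Main
begin

datatype 'a tht =
    Atom 'a
  | Bot
  | Or "'a tht" "'a tht"
  | And "'a tht" "'a tht"
  | Imp "'a tht" "'a tht"
  | Next "'a tht"
  | Until "'a tht" "'a tht"
  | Release "'a tht" "'a tht"

definition Neg :: "'a tht \<Rightarrow> 'a tht" where "Neg \<phi> = Imp \<phi> Bot"
definition Top :: "'a tht" where "Top = Neg Bot"
definition Ev :: "'a tht \<Rightarrow> 'a tht" where "Ev \<phi> = Until Top \<phi>"
definition Alw :: "'a tht \<Rightarrow> 'a tht" where "Alw \<phi> = Release Bot \<phi>"

section \<open>Semantics: an interpretation M = (H,T) is given by two words H T :: nat => 'a set\<close>

fun sat :: "(nat \<Rightarrow> 'a set) \<Rightarrow> (nat \<Rightarrow> 'a set) \<Rightarrow> nat \<Rightarrow> 'a tht \<Rightarrow> bool" where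
  "sat H T i (Atom p) = (p \<in> H i)"
| "sat H T i Bot = False"
| "sat H T i (Or a b) = (sat H T i a \<or> sat H T i b)"
| "sat H T i (And a b) = (sat H T i a \<and> sat H T i b)"
| "sat H T i (Imp a b) =
     ((\<not> sat H T i a \<or> sat H T i b) \<and> (\<not> sat T T i a \<or> sat T T i b))"
| "sat H T i (Next a) = sat H T (Suc i) a"
| "sat H T i (Until a b) =
     (\<exists>j\<ge>i. sat H T j b \<and> (\<forall>k. i \<le> k \<and> k < j \<longrightarrow> sat H T k a))"
| "sat H T i (Release a b) =
     (\<forall>j\<ge>i. sat H T j b \<or> (\<exists>k. i \<le> k \<and> k < j \<and> sat H T k a))"

definition tht_interp :: "(nat \<Rightarrow> 'a set) \<Rightarrow> (nat \<Rightarrow> 'a set) \<Rightarrow> bool" where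
  "tht_interp H T \<longleftrightarrow> (\<forall>i. H i \<subseteq> T i)"

definition models :: "(nat \<Rightarrow> 'a set) \<Rightarrow> (nat \<Rightarrow> 'a set) \<Rightarrow> 'a tht \<Rightarrow> bool" where
  "models H T \<phi> \<longleftrightarrow> sat H T 0 \<phi>"

text \<open>Equilibrium model (T,T) of phi (given by its total trace T).\<close>
definition equilibrium_model :: "'a tht \<Rightarrow> (nat \<Rightarrow> 'a set) \<Rightarrow> bool" where
  "equilibrium_model \<phi> T \<longleftrightarrow>
     models T T \<phi> \<and>
     (\<forall>H. (\<forall>i. H i \<subseteq> T i) \<and> H \<noteq> T \<longrightarrow> \<not> models H T \<phi>)"

fun subfs :: "'a tht \<Rightarrow> 'a tht set" where
  "subfs (Atom p) = {Atom p}"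
| "subfs Bot = {Bot}"
| "subfs (Or a b) = insert (Or a b) (subfs a \<union> subfs b)"
| "subfs (And a b) = insert (And a b) (subfs a \<union> subfs b)"
| "subfs (Imp a b) = insert (Imp a b) (subfs a \<union> subfs b)"
| "subfs (Next a) = insert (Next a) (subfs a)"
| "subfs (Until a b) = insert (Until a b) (subfs a \<union> subfs b)"
| "subfs (Release a b) = insert (Release a b) (subfs a \<union> subfs b)"

fun temporal_free :: "'a tht \<Rightarrow> bool" where
  "temporal_free (Atom p) = True"
| "temporal_free Bot = True"
| "temporal_free (Or a b) = (temporal_free a \<and> temporal_free b)"
| "temporal_free (And a b) = (temporal_free a \<and> temporal_free b)"
| "temporal_free (Imp a b) = (temporal_free a \<and> temporal_free b)"
| "temporal_free (Next a) = False"
| "temporal_free (Until a b) = False"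
| "temporal_free (Release a b) = False"

text \<open>THT_1(X,G): only X and G (= Release Bot) as temporal modalities, unnested.\<close>
fun tht1_XG :: "'a tht \<Rightarrow> bool" where
  "tht1_XG (Atom p) = True"
| "tht1_XG Bot = True"
| "tht1_XG (Or a b) = (tht1_XG a \<and> tht1_XG b)"
| "tht1_XG (And a b) = (tht1_XG a \<and> tht1_XG b)"
| "tht1_XG (Imp a b) = (tht1_XG a \<and> tht1_XG b)"
| "tht1_XG (Next a) = temporal_free a"
| "tht1_XG (Until a b) = False"
| "tht1_XG (Release a b) = (a = Bot \<and> temporal_free b)"

definition witness_conds ::
  "(nat \<Rightarrow> 'a set) \<Rightarrow> (nat \<Rightarrow> 'a set) \<Rightarrow> 'a tht \<Rightarrow> nat set \<Rightarrow> bool" where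
  "witness_conds H T \<phi> W \<longleftrightarrow>
     0 \<in> W
   \<and> ((\<exists>\<psi>. Next \<psi> \<in> subfs \<phi>) \<longrightarrow> 1 \<in> W)
   \<and> (H \<noteq> T \<longrightarrow> (\<exists>i\<in>W. H i \<subset> T i))
   \<and> (\<forall>a b. Until a b \<in> subfs \<phi> \<longrightarrow>
        (models H T (Until a b) \<longrightarrow> (LEAST i. sat H T i b) \<in> W)
      \<and> (\<not> models H T (Until a b) \<and> models H T (Ev b) \<longrightarrow>
           (LEAST i. \<not> sat H T i a) \<in> W))
   \<and> (\<forall>a b. Release a b \<in> subfs \<phi> \<longrightarrow>
        (\<not> models H T (Release a b) \<longrightarrow> (LEAST i. \<not> sat H T i b) \<in> W)
      \<and> (models H T (Release a b) \<and> \<not> models H T (Alw b) \<longrightarrow>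
           (LEAST i. sat H T i (And a b)) \<in> W))"

definition witness_pattern ::
  "(nat \<Rightarrow> 'a set) \<Rightarrow> (nat \<Rightarrow> 'a set) \<Rightarrow> 'a tht \<Rightarrow> (nat \<Rightarrow> nat) \<Rightarrow> bool" where
  "witness_pattern H T \<phi> n \<longleftrightarrow>
     strict_mono n \<and>
     (\<exists>k. (\<forall>i\<ge>Suc k. H (n i) = H (n (Suc k)) \<and> T (n i) = T (n (Suc k)))
        \<and> witness_conds H T \<phi> (n ` {0..k})
        \<and> (\<forall>W'. W' \<subset> n ` {0..k} \<longrightarrow> \<not> witness_conds H T \<phi> W'))"

text \<open>The witness extraction of M=(H,T) along n is (H o n, T o n).\<close>

end

theory Submission
  imports Defs
begin

lemma tf_local:
  "temporal_free \<psi> \<Longrightarrow> H i = H2 j \<Longrightarrow> T i = T2 j \<Longrightarrow> sat H T i \<psi> = sat H2 T2 j \<psi>"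
proof (induction \<psi> arbitrary: H H2)
  case (Imp a b)
  then show ?case using Imp.IH[of T T2] by auto
qed auto

lemma pers:
  "(\<forall>m. H m \<subseteq> T m) \<Longrightarrow> sat H T i \<phi> \<Longrightarrow> sat T T i \<phi>"
proof (induction \<phi> arbitrary: i)
  case (Release a b)
  show ?case unfolding sat.simps
  proof (intro allI impI)
    fix j assume "i \<le> j"
    then have "sat H T j b \<or> (\<exists>k. i \<le> k \<and> k < j \<and> sat H T k a)" using Release.prems(2) by simp
    then show "sat T T j b \<or> (\<exists>k. i \<le> k \<and> k < j \<and> sat T T k a)"
      using Release.IH Release.prems(1) by blast
  qed
next
  case (Until a b)
  then show ?case by (simp only: sat.simps) blast
qed auto

lemma mainB:
  fixes n :: "nat \<Rightarrow> nat"
  assumes n0: "n 0 = 0"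
    and n1: "(\<exists>\<psi>. Next \<psi> \<in> subfs \<phi>) \<longrightarrow> n 1 = 1"
    and rel: "\<forall>b. Release Bot b \<in> subfs \<phi> \<and> \<not> sat T T 0 (Release Bot b)
               \<longrightarrow> (LEAST i. \<not> sat T T i b) \<in> range n"
  shows "tht1_XG \<phi>0 \<Longrightarrow> subfs \<phi>0 \<subseteq> subfs \<phi> \<Longrightarrow>
     (\<forall>i. H (n i) = H' i) \<Longrightarrow> (\<forall>m. H m \<subseteq> T m) \<Longrightarrow> (\<forall>m. m \<notin> range n \<longrightarrow> H m = T m)
     \<Longrightarrow> (\<forall>i. H' i \<subseteq> T (n i))
     \<Longrightarrow> sat H T 0 \<phi>0 = sat H' (T \<circ> n) 0 \<phi>0"
proof (induction \<phi>0 arbitrary: H H')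
  case (Atom p)
  then show ?case using n0 by (metis sat.simps(1))
next
  case Bot
  then show ?case by simp
next
  case (Or a b)
  then show ?case by auto
next
  case (And a b)
  then show ?case by auto
next
  case (Imp a b)
  have s: "subfs a \<subseteq> subfs \<phi>" "subfs b \<subseteq> subfs \<phi>" using Imp.prems(2) by auto
  have t: "tht1_XG a" "tht1_XG b" using Imp.prems(1) by auto
  have h1: "sat H T 0 a = sat H' (T \<circ> n) 0 a" "sat H T 0 b = sat H' (T \<circ> n) 0 b"
    using Imp.IH s t Imp.prems by blast+
  have h2: "sat T T 0 a = sat (T \<circ> n) (T \<circ> n) 0 a" "sat T T 0 b = sat (T \<circ> n) (T \<circ> n) 0 b"
    using Imp.IH[of T "T \<circ> n"] s t by (auto simp: comp_def)
  show ?case using h1 h2 by (simp only: sat.simps)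
next
  case (Next a)
  have "n 1 = 1" using n1 Next.prems(2) by auto
  then have "sat H T 1 a = sat H' (T \<circ> n) 1 a"
    using tf_local[of a H 1 H' 1 T "T \<circ> n"] Next.prems by (metis comp_apply tht1_XG.simps(6))
  then show ?case by (simp add: comp_def)
next
  case (Until a b)
  then show ?case by simp
next
  case (Release a b)
  have a: "a = Bot" and tb: "temporal_free b" using Release.prems(1) by auto
  have inS: "Release Bot b \<in> subfs \<phi>" using Release.prems(2) a by auto
  have L: "sat H T 0 (Release a b) = (\<forall>j. sat H T j b)" using a by auto
  have R: "sat H' (T \<circ> n) 0 (Release a b) = (\<forall>j. sat H' (T \<circ> n) j b)" using a by auto
  have loc: "\<And>i. sat H T (n i) b = sat H' (T \<circ> n) i b"
    using Release.prems(3) by (intro tf_local[OF tb]) simp_all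
  have sub': "\<forall>i. H' i \<subseteq> (T \<circ> n) i" using Release.prems(6) by simp
  show ?case unfolding L R
  proof
    assume "\<forall>j. sat H T j b" then show "\<forall>j. sat H' (T \<circ> n) j b" using loc by blast
  next
    assume A: "\<forall>j. sat H' (T \<circ> n) j b"
    have tt: "\<forall>j. sat T T j b"
    proof (rule ccontr)
      assume "\<not> (\<forall>j. sat T T j b)"
      then have "\<not> sat T T 0 (Release Bot b)" by auto
      then have "(LEAST i. \<not> sat T T i b) \<in> range n" using rel inS by blast
      then obtain i where ei: "n i = (LEAST i. \<not> sat T T i b)" by auto
      have "\<not> sat T T (n i) b" unfolding ei using \<open>\<not> (\<forall>j. sat T T j b)\<close>
        by (metis LeastI)
      moreover have "sat (T \<circ> n) (T \<circ> n) i b" using pers[OF sub'] A by blast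
      then have "sat T T (n i) b" using tf_local[OF tb, of "T \<circ> n" i T "n i" "T \<circ> n" T] by simp
      ultimately show False by simp
    qed
    show "\<forall>j. sat H T j b"
    proof
      fix j
      show "sat H T j b"
      proof (cases "j \<in> range n")
        case True
        then obtain i where "j = n i" by auto
        then show ?thesis using loc A by simp
      next
        case False
        then have "H j = T j" using Release.prems(5) by blast
        then show ?thesis using tf_local[OF tb, of H j T j T T] tt by simp
      qed
    qed
  qed
qed

theorem mainTheorem8:
  fixes \<phi> :: "'a::finite tht" and T :: "nat \<Rightarrow> 'a set" and n :: "nat \<Rightarrow> nat"
  assumes "tht1_XG \<phi>"
    and "equilibrium_model \<phi> T"
    and "witness_pattern T T \<phi> n"
  shows "equilibrium_model \<phi> (T \<circ> n)"
proof -
  from assms(3) obtain k where sm: "strict_mono n" and wc: "witness_conds T T \<phi> (n ` {0..k})"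
    unfolding witness_pattern_def by blast
  have "0 \<in> n ` {0..k}" using wc unfolding witness_conds_def by blast
  then obtain i where "n i = 0" by auto
  then have n0: "n 0 = 0" using sm by (metis le0 le_zero_eq strict_mono_less_eq)
  have n1: "(\<exists>\<psi>. Next \<psi> \<in> subfs \<phi>) \<longrightarrow> n 1 = 1"
  proof
    assume "\<exists>\<psi>. Next \<psi> \<in> subfs \<phi>"
    then have "1 \<in> n ` {0..k}" using wc unfolding witness_conds_def by blast
    then obtain i where i: "n i = 1" by auto
    then have "i \<noteq> 0" using n0 by (cases i) auto
    then have "n 1 \<le> 1" using i sm by (metis One_nat_def Suc_leI neq0_conv strict_mono_less_eq)
    moreover have "n 1 > 0" using sm n0 by (metis strict_mono_def zero_less_one)
    ultimately show "n 1 = 1" by simp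
  qed
  have rel: "\<forall>b. Release Bot b \<in> subfs \<phi> \<and> \<not> sat T T 0 (Release Bot b)
               \<longrightarrow> (LEAST i. \<not> sat T T i b) \<in> range n"
    using wc unfolding witness_conds_def models_def by blast
  note B = mainB[OF n0 n1 rel assms(1) order_refl]
  have eq: "models T T \<phi>" "\<forall>H. (\<forall>i. H i \<subseteq> T i) \<and> H \<noteq> T \<longrightarrow> \<not> models H T \<phi>"
    using assms(2) unfolding equilibrium_model_def by auto
  have tot: "models (T \<circ> n) (T \<circ> n) \<phi>"
    using B[of T "T \<circ> n"] eq(1) unfolding models_def by simp
  have minim: "\<not> models H' (T \<circ> n) \<phi>" if H1: "\<forall>i. H' i \<subseteq> (T \<circ> n) i" and H2: "H' \<noteq> T \<circ> n" for H'
  proof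
    assume mod: "models H' (T \<circ> n) \<phi>"
    have inj: "inj n" using sm strict_mono_imp_inj_on by blast
    define H where "H m = (if m \<in> range n then H' (inv n m) else T m)" for m
    have hn: "\<forall>i. H (n i) = H' i" using inj by (simp add: H_def)
    have hs: "\<forall>m. H m \<subseteq> T m"
    proof
      fix m show "H m \<subseteq> T m"
      proof (cases "m \<in> range n")
        case True
        then obtain i where m: "m = n i" by auto
        then have "H m = H' i" using inj by (simp add: H_def)
        moreover have "H' i \<subseteq> T (n i)" using H1 by (metis comp_apply)
        ultimately show ?thesis using m by (simp only:)
      qed (simp add: H_def)
    qed
    have ho: "\<forall>m. m \<notin> range n \<longrightarrow> H m = T m" by (simp add: H_def)
    have "H \<noteq> T"
    proof
      assume "H = T"
      then have "H' = T \<circ> n" using hn by (simp add: fun_eq_iff)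
      then show False using H2 by simp
    qed
    moreover have "models H T \<phi>"
      using B[of H H'] hn hs ho H1 mod unfolding models_def by simp
    ultimately show False using eq(2) hs by blast
  qed
  show ?thesis unfolding equilibrium_model_def
  proof (intro conjI allI impI)
    show "models (T \<circ> n) (T \<circ> n) \<phi>" by (rule tot)
  next
    fix H' :: "nat \<Rightarrow> 'a set"
    assume "(\<forall>i. H' i \<subseteq> (T \<circ> n) i) \<and> H' \<noteq> T \<circ> n"
    then show "\<not> models H' (T \<circ> n) \<phi>" using minim by (elim conjE)
  qed
qed

end
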